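(* Under the conical assumption (all dependent variables have vanishing covariant derivative in the radial direction $r$, measured from the cone apex), the steady compressible Euler equations in a 3D Euclidean space with coordinates $(\xi^1,\xi^2,r)$, where $r$ is orthogonal to the surface coordinates and has unit scale, reduce to the following system on the surface of the unit sphere: \begin{gather*} \frac{\partial}{\partial \xi^\beta}\left(\rho\sqrt{g}v^\beta\right) + 2\rho \sqrt{g}V^3 = 0,\\ \frac{\partial }{\partial\xi^\beta}\left(\sqrt{g}\left[\rho v^\alpha v^\beta + g^{\alpha\beta}P\right]\right) + \overset{(g)}{\Gamma}{}_{\gamma}{}^{\alpha}{}_{\nu}\,\sqrt{g}\left[\rho v^\gamma v^\nu+g^{\gamma\nu}P\right] + 3\rho\sqrt{g}v^\alpha V^3 = 0,\\ v^\alpha\frac{\partial V^3}{\partial \xi^\alpha} - q^2_c = 0,\\ \frac{\partial}{\partial \xi^\beta}\left( \sqrt{g}\left[\rho E+P\right] v^\beta \right) + 2\sqrt{g}\left[\rho E+P\right] V^3 =0. \end{gather*}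
   Context: Einstein summation is used; Greek indices take values 1,2. $\rho$ is density, $v^\beta = r\tilde v^\beta$ are the rescaled (r-independent) surface velocity components, $V^3$ is the radial velocity component, $E=e+\frac12|\mathbf V|^2$ is total specific energy with $e$ the specific thermal energy, $P=P(\rho,e)$ the pressure, $g_{\alpha\beta}=\tilde g_{\alpha\beta}/r^2$ the metric of the unit sphere in arbitrary surface coordinates $\xi^\alpha$ (with $r$-dependence removed), $g^{\alpha\beta}$ its inverse, $g$ its determinant, $q_c=\sqrt{g_{\alpha\beta}v^\alpha v^\beta}$ the crossflow speed, and $\overset{(g)}{\Gamma}{}_{\gamma}{}^{\alpha}{}_{\nu}$ the Christoffel symbol (of the second kind, upper index $\alpha$, lower indices $\gamma,\nu$) of the metric $g_{\alpha\beta}$. The starting equations are the steady Euler equations in coordinate-free form: $(\rho\sqrt{G}V^j)_{|j}=0$, $(\sqrt{G}[\rho V^iV^j+G^{ij}P])_{|j}=0$, $(\sqrt{G}[\rho E+P]V^j)_{|j}=0$, with $G_{ij}$ the 3D metric and $(\cdot)_{|j}$ the covariant derivative. *)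

theory Defs
  imports "HOL-Analysis.Analysis"
begin

text \<open>Indices: surface indices alpha, beta in {1,2}; radial index 3.
  Surface points xi = (xi1, xi2) :: real * real;
  space points (xi1, xi2, r) :: real * real * real.\<close>

type_synonym pt2 = "real \<times> real"
type_synonym pt3 = "real \<times> real \<times> real"

definition pd2 :: "(pt2 \<Rightarrow> real) \<Rightarrow> nat \<Rightarrow> pt2 \<Rightarrow> real" where
  "pd2 f a x = deriv (\<lambda>t. f (fst x + (if a = 1 then t else 0),
                                snd x + (if a = 2 then t else 0))) 0"

definition pd3 :: "(pt3 \<Rightarrow> real) \<Rightarrow> nat \<Rightarrow> pt3 \<Rightarrow> real" where
  "pd3 f i x = deriv (\<lambda>t. f (fst x + (if i = 1 then t else 0),
                                fst (snd x) + (if i = 2 then t else 0),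
                                snd (snd x) + (if i = 3 then t else 0))) 0"

definition detn :: "nat \<Rightarrow> (nat \<Rightarrow> nat \<Rightarrow> real) \<Rightarrow> real" where
  "detn n A = (\<Sum>p | p permutes {1..n}. of_int (sign p) * (\<Prod>i\<in>{1..n}. A i (p i)))"

definition inv_metric :: "nat \<Rightarrow> (nat \<Rightarrow> nat \<Rightarrow> real) \<Rightarrow> nat \<Rightarrow> nat \<Rightarrow> real" where
  "inv_metric n A = (THE h. (\<forall>i\<in>{1..n}. \<forall>k\<in>{1..n}.
        (\<Sum>j\<in>{1..n}. A i j * h j k) = (if i = k then 1 else 0))
      \<and> (\<forall>i k. \<not> (i \<in> {1..n} \<and> k \<in> {1..n}) \<longrightarrow> h i k = 0))"

text \<open>Christoffel symbol of the second kind  Gamma_j^i_k  (upper index i,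
  lower indices j, k) of a metric M in n dimensions, w.r.t. the partial
  derivative operator D.\<close>

definition christoffel ::
  "nat \<Rightarrow> ('p \<Rightarrow> nat \<Rightarrow> nat \<Rightarrow> real) \<Rightarrow> (('p \<Rightarrow> real) \<Rightarrow> nat \<Rightarrow> 'p \<Rightarrow> real)
     \<Rightarrow> 'p \<Rightarrow> nat \<Rightarrow> nat \<Rightarrow> nat \<Rightarrow> real" where
  "christoffel n M D x i j k =
     (1/2) * (\<Sum>l\<in>{1..n}. inv_metric n (M x) i l *
        (D (\<lambda>y. M y l k) j x + D (\<lambda>y. M y l j) k x - D (\<lambda>y. M y j k) l x))"

abbreviation Gam3 :: "(pt3 \<Rightarrow> nat \<Rightarrow> nat \<Rightarrow> real) \<Rightarrow> pt3 \<Rightarrow> nat \<Rightarrow> nat \<Rightarrow> nat \<Rightarrow> real" where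
  "Gam3 G \<equiv> christoffel 3 G pd3"

abbreviation Gam2 :: "(pt2 \<Rightarrow> nat \<Rightarrow> nat \<Rightarrow> real) \<Rightarrow> pt2 \<Rightarrow> nat \<Rightarrow> nat \<Rightarrow> nat \<Rightarrow> real" where
  "Gam2 g \<equiv> christoffel 2 g pd2"

definition cone_metric :: "(pt2 \<Rightarrow> nat \<Rightarrow> nat \<Rightarrow> real) \<Rightarrow> pt3 \<Rightarrow> nat \<Rightarrow> nat \<Rightarrow> real" where
  "cone_metric g x i j =
     (if i \<in> {1,2} \<and> j \<in> {1,2} then (snd (snd x))\<^sup>2 * g (fst x, fst (snd x)) i j
      else if i = 3 \<and> j = 3 then 1 else 0)"

text \<open>Covariant derivative of a vector density W^j (weight 1), contracted: W^j_{|j}.\<close>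

definition cdiv_dens1 ::
  "(pt3 \<Rightarrow> nat \<Rightarrow> nat \<Rightarrow> real) \<Rightarrow> (pt3 \<Rightarrow> nat \<Rightarrow> real) \<Rightarrow> pt3 \<Rightarrow> real" where
  "cdiv_dens1 G W x = (\<Sum>j\<in>{1..3}. pd3 (\<lambda>y. W y j) j x
      + (\<Sum>k\<in>{1..3}. Gam3 G x j j k * W x k - Gam3 G x k k j * W x j))"

text \<open>Covariant derivative of a rank-2 contravariant tensor density T^{ij}
  (weight 1), contracted on the second index: T^{ij}_{|j}.\<close>

definition cdiv_dens2 ::
  "(pt3 \<Rightarrow> nat \<Rightarrow> nat \<Rightarrow> real) \<Rightarrow> (pt3 \<Rightarrow> nat \<Rightarrow> nat \<Rightarrow> real) \<Rightarrow> pt3 \<Rightarrow> nat \<Rightarrow> real" where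
  "cdiv_dens2 G T x i = (\<Sum>j\<in>{1..3}. pd3 (\<lambda>y. T y i j) j x
      + (\<Sum>k\<in>{1..3}. Gam3 G x i j k * T x k j + Gam3 G x j j k * T x i k
                      - Gam3 G x k k j * T x i j))"

end

theory Submission
  imports Defs
begin
lemma sum_13: "(\<Sum>j\<in>{1..3::nat}. f j) = f 1 + f 2 + (f 3 :: real)"
proof -
  have "{1..3::nat} = {1,2,3}" by auto
  then show ?thesis by simp
qed

lemma sum_12: "(\<Sum>j\<in>{1..2::nat}. f j) = f 1 + (f 2 :: real)"
proof -
  have "{1..2::nat} = {1,2}" by auto
  then show ?thesis by simp
qed

lemma line_diff:
  fixes F :: "pt2 \<Rightarrow> real"
  assumes "F differentiable (at \<xi>)"
  shows "(\<lambda>t. F (fst \<xi> + (if i = 1 then t else 0), snd \<xi> + (if i = 2 then t else 0))) differentiable (at 0)"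
proof -
  have d: "(\<lambda>t::real. (fst \<xi> + (if i = 1 then t else 0), snd \<xi> + (if i = 2 then t else 0))) differentiable (at 0)"
    by (cases "i = 1"; cases "i = 2") (auto intro!: derivative_intros)
  have "F differentiable (at ((\<lambda>t::real. (fst \<xi> + (if i = 1 then t else 0), snd \<xi> + (if i = 2 then t else 0))) 0))"
    using assms by simp
  from differentiable_compose[OF this d] show ?thesis .
qed

lemma line_DERIV:
  fixes F :: "pt2 \<Rightarrow> real"
  assumes "F differentiable (at \<xi>)"
  shows "((\<lambda>t. F (fst \<xi> + (if i = 1 then t else 0), snd \<xi> + (if i = 2 then t else 0))) has_real_derivative pd2 F i \<xi>) (at 0)"
  unfolding pd2_def using line_diff[OF assms] DERIV_deriv_iff_real_differentiable by blast

lemma pd2_mult: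
  fixes F H :: "pt2 \<Rightarrow> real"
  assumes "F differentiable (at \<xi>)" "H differentiable (at \<xi>)"
  shows "pd2 (\<lambda>y. F y * H y) i \<xi> = F \<xi> * pd2 H i \<xi> + H \<xi> * pd2 F i \<xi>"
proof -
  have "((\<lambda>t. F (fst \<xi> + (if i = 1 then t else 0), snd \<xi> + (if i = 2 then t else 0)) *
          H (fst \<xi> + (if i = 1 then t else 0), snd \<xi> + (if i = 2 then t else 0)))
    has_real_derivative (pd2 F i \<xi> * H \<xi> + pd2 H i \<xi> * F \<xi>)) (at 0)"
    using DERIV_mult[OF line_DERIV[OF assms(1), of i] line_DERIV[OF assms(2), of i]] by simp
  then show ?thesis unfolding pd2_def[of "\<lambda>y. F y * H y"] by (simp add: DERIV_imp_deriv algebra_simps)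
qed

lemma pd3_cong_open:
  fixes f f' :: "pt3 \<Rightarrow> real"
  assumes "open S" "x \<in> S" "\<forall>y\<in>S. f y = f' y"
  shows "pd3 f i x = pd3 f' i x"
proof -
  let ?m = "\<lambda>t::real. (fst x + (if i = 1 then t else 0), fst (snd x) + (if i = 2 then t else 0),
                                snd (snd x) + (if i = 3 then t else 0))"
  have c: "continuous (at 0) ?m" by (cases "i = 1"; cases "i = 2"; cases "i = 3") (auto intro!: continuous_intros)
  have "?m 0 = x" by simp
  then have "?m 0 \<in> S" using assms by simp
  then have "eventually (\<lambda>t. ?m t \<in> S) (nhds 0)"
  proof -
    have "(?m \<longlongrightarrow> ?m 0) (at 0)" using c by (simp add: isCont_def)
    then have "eventually (\<lambda>t. ?m t \<in> S) (at 0)"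
      using \<open>?m 0 \<in> S\<close> assms(1) topological_tendstoD by blast
    then show ?thesis using \<open>?m 0 \<in> S\<close> by (simp add: eventually_nhds_conv_at)
  qed
  then have "eventually (\<lambda>t. f (?m t) = f' (?m t)) (nhds 0)"
    by eventually_elim (use assms in auto)
  then show ?thesis unfolding pd3_def by (rule deriv_cong_ev) simp
qed

lemma pd3_12:
  fixes F :: "pt2 \<Rightarrow> real"
  assumes "i \<in> {1,2}" "F differentiable (at (fst x, fst (snd x)))"
  shows "pd3 (\<lambda>y. c (snd (snd y)) * F (fst y, fst (snd y))) i x = c (snd (snd x)) * pd2 F i (fst x, fst (snd x))"
proof -
  have "((\<lambda>t. c (snd (snd x)) * F (fst x + (if i = 1 then t else 0), fst (snd x) + (if i = 2 then t else 0)))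
      has_real_derivative c (snd (snd x)) * pd2 F i (fst x, fst (snd x))) (at 0)"
    using DERIV_cmult[OF line_DERIV[OF assms(2), of i]] by simp
  then show ?thesis unfolding pd3_def using assms(1) by (auto intro!: DERIV_imp_deriv)
qed

lemma pd3_3:
  fixes F :: "pt2 \<Rightarrow> real"
  assumes "(c has_real_derivative c') (at (snd (snd x)))"
  shows "pd3 (\<lambda>y. c (snd (snd y)) * F (fst y, fst (snd y))) 3 x = c' * F (fst x, fst (snd x))"
proof -
  have "((\<lambda>t. c (t + snd (snd x))) has_real_derivative c') (at 0)"
    using assms DERIV_shift[of c c' 0 "snd (snd x)"] by simp
  then have "((\<lambda>t. c (snd (snd x) + t) * F (fst x, fst (snd x))) has_real_derivative c' * F (fst x, fst (snd x))) (at 0)"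
    using DERIV_cmult_right by (simp add: add.commute)
  then show ?thesis unfolding pd3_def by (auto intro!: DERIV_imp_deriv)
qed

lemma pd3_const: "pd3 (\<lambda>y. k) i x = 0"
  unfolding pd3_def by simp

lemma pd3_3_DERIV:
  fixes f :: "pt3 \<Rightarrow> real"
  assumes "f differentiable (at (a, b, s))"
  shows "((\<lambda>u. f (a, b, u)) has_real_derivative pd3 f 3 (a, b, s)) (at s)"
proof -
  have d: "(\<lambda>t::real. (a, b, s + t)) differentiable (at 0)" by (auto intro!: derivative_intros)
  have "(\<lambda>t. f (a, b, s + t)) differentiable (at 0)"
    using differentiable_compose[of f "\<lambda>t::real. (a, b, s + t)" 0] assms d by simp
  then have "((\<lambda>t. f (a, b, s + t)) has_real_derivative pd3 f 3 (a, b, s)) (at 0)"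
    unfolding pd3_def using DERIV_deriv_iff_real_differentiable by simp
  then show ?thesis using DERIV_shift[of "\<lambda>u. f (a, b, u)" _ 0 s] by (simp add: add.commute)
qed

lemma detn2: "detn 2 A = A 1 1 * A 2 2 - A 1 2 * A 2 1"
proof -
  have e: "{1..2::nat} = insert 1 (insert 2 {})" by auto
  show ?thesis unfolding detn_def e
    apply (subst sum_over_permutations_insert, simp, simp)
    apply (subst sum_over_permutations_insert, simp, simp)
    apply (simp add: sign_compose permutation_swap_id sign_swap_id transpose_def)
    done
qed

lemma detn3: "detn 3 A = A 1 1 * A 2 2 * A 3 3 - A 1 1 * A 2 3 * A 3 2 - A 1 2 * A 2 1 * A 3 3
   + A 1 2 * A 2 3 * A 3 1 + A 1 3 * A 2 1 * A 3 2 - A 1 3 * A 2 2 * A 3 1"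
proof -
  have e: "{1..3::nat} = insert 1 (insert 2 (insert 3 {}))" by auto
  show ?thesis unfolding detn_def e
    apply (subst sum_over_permutations_insert, simp, simp)
    apply (subst sum_over_permutations_insert, simp, simp)
    apply (subst sum_over_permutations_insert, simp, simp)
    apply (simp add: sign_compose permutation_swap_id sign_swap_id transpose_def permutation_compose)
    done
qed

lemma sum_delta_mult: "finite S \<Longrightarrow> i \<in> S \<Longrightarrow> (\<Sum>j\<in>S. (if i = j then 1 else 0) * f j) = (f i :: real)"
proof -
  assume "finite S" "i \<in> S"
  have "(\<Sum>j\<in>S. (if i = j then 1 else 0) * f j) = (\<Sum>j\<in>S. if i = j then f j else 0)"
    by (rule sum.cong) auto
  then show ?thesis using \<open>finite S\<close> \<open>i \<in> S\<close> by simp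
qed

lemma inv_metric_eq:
  assumes r: "\<forall>i\<in>{1..n}. \<forall>k\<in>{1..n}. (\<Sum>j\<in>{1..n}. A i j * h0 j k) = (if i = k then 1 else 0)"
    and l: "\<forall>i\<in>{1..n}. \<forall>k\<in>{1..n}. (\<Sum>j\<in>{1..n}. h0 i j * A j k) = (if i = k then 1 else 0)"
    and z: "\<forall>i k. \<not> (i \<in> {1..n} \<and> k \<in> {1..n}) \<longrightarrow> h0 i k = 0"
  shows "inv_metric n A = h0"
  unfolding inv_metric_def
proof (rule the_equality)
  show "(\<forall>i\<in>{1..n}. \<forall>k\<in>{1..n}. (\<Sum>j\<in>{1..n}. A i j * h0 j k) = (if i = k then 1 else 0)) \<and>
    (\<forall>i k. \<not> (i \<in> {1..n} \<and> k \<in> {1..n}) \<longrightarrow> h0 i k = 0)" using r z by blast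
next
  fix h assume H: "(\<forall>i\<in>{1..n}. \<forall>k\<in>{1..n}. (\<Sum>j\<in>{1..n}. A i j * h j k) = (if i = k then 1 else (0::real))) \<and>
    (\<forall>i k. \<not> (i \<in> {1..n} \<and> k \<in> {1..n}) \<longrightarrow> h i k = 0)"
  show "h = h0"
  proof (intro ext)
    fix i k
    show "h i k = h0 i k"
    proof (cases "i \<in> {1..n} \<and> k \<in> {1..n}")
      case False then show ?thesis using H z by auto
    next
      case True
      have "h i k = (\<Sum>j\<in>{1..n}. (if i = j then 1 else 0) * h j k)"
        using True by (simp add: sum_delta_mult)
      also have "\<dots> = (\<Sum>j\<in>{1..n}. (\<Sum>l\<in>{1..n}. h0 i l * A l j) * h j k)"
        using l True by (intro sum.cong) auto
      also have "\<dots> = (\<Sum>j\<in>{1..n}. \<Sum>l\<in>{1..n}. h0 i l * (A l j * h j k))"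
        by (simp add: sum_distrib_right mult.assoc)
      also have "\<dots> = (\<Sum>l\<in>{1..n}. \<Sum>j\<in>{1..n}. h0 i l * (A l j * h j k))"
        by (rule sum.swap)
      also have "\<dots> = (\<Sum>l\<in>{1..n}. h0 i l * (\<Sum>j\<in>{1..n}. A l j * h j k))"
        by (simp add: sum_distrib_left)
      also have "\<dots> = (\<Sum>l\<in>{1..n}. h0 i l * (if l = k then 1 else 0))"
        using H True by (intro sum.cong) auto
      also have "\<dots> = (\<Sum>l\<in>{1..n}. (if k = l then 1 else 0) * h0 i l)"
        by (rule sum.cong) auto
      also have "\<dots> = h0 i k" using True sum_delta_mult[of "{1..n}" k "h0 i"] by simp
      finally show ?thesis .
    qed
  qed
qed


lemma inv_metric_eq2:
  assumes "\<And>i k. i \<in> {1,2} \<Longrightarrow> k \<in> {1,2} \<Longrightarrow> A i 1 * h 1 k + A i 2 * h 2 k = (if i = k then 1 else 0)"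
    and "\<And>i k. i \<in> {1,2} \<Longrightarrow> k \<in> {1,2} \<Longrightarrow> h i 1 * A 1 k + h i 2 * A 2 k = (if i = k then 1 else 0)"
    and "\<And>i k. \<not> (i \<in> {1,2} \<and> k \<in> {1,2}) \<Longrightarrow> h i k = 0"
  shows "inv_metric 2 A = h"
proof -
  have e: "{1..2::nat} = {1,2}" by auto
  show ?thesis
    apply (rule inv_metric_eq)
    subgoal unfolding sum_12 unfolding e by (intro ballI) (rule assms(1))
    subgoal unfolding sum_12 unfolding e by (intro ballI) (rule assms(2))
    subgoal unfolding e by (intro allI impI) (rule assms(3))
    done
qed

lemma inv_metric_eq3:
  assumes "\<And>i k. i \<in> {1,2,3} \<Longrightarrow> k \<in> {1,2,3} \<Longrightarrow> A i 1 * h 1 k + A i 2 * h 2 k + A i 3 * h 3 k = (if i = k then 1 else 0)"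
    and "\<And>i k. i \<in> {1,2,3} \<Longrightarrow> k \<in> {1,2,3} \<Longrightarrow> h i 1 * A 1 k + h i 2 * A 2 k + h i 3 * A 3 k = (if i = k then 1 else 0)"
    and "\<And>i k. \<not> (i \<in> {1,2,3} \<and> k \<in> {1,2,3}) \<Longrightarrow> h i k = 0"
  shows "inv_metric 3 A = h"
proof -
  have e: "{1..3::nat} = {1,2,3}" by auto
  show ?thesis
    apply (rule inv_metric_eq)
    subgoal unfolding sum_13 unfolding e by (intro ballI) (rule assms(1))
    subgoal unfolding sum_13 unfolding e by (intro ballI) (rule assms(2))
    subgoal unfolding e by (intro allI impI) (rule assms(3))
    done
qed

lemma inv2:
  assumes d: "A 1 1 * A 2 2 - A 1 2 * A 2 1 \<noteq> 0"
  shows "inv_metric 2 A = (\<lambda>i k. if i = 1 \<and> k = 1 then A 2 2 / (A 1 1 * A 2 2 - A 1 2 * A 2 1)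
    else if i = 1 \<and> k = 2 then - A 1 2 / (A 1 1 * A 2 2 - A 1 2 * A 2 1)
    else if i = 2 \<and> k = 1 then - A 2 1 / (A 1 1 * A 2 2 - A 1 2 * A 2 1)
    else if i = 2 \<and> k = 2 then A 1 1 / (A 1 1 * A 2 2 - A 1 2 * A 2 1) else 0)"
  apply (rule inv_metric_eq2)
  subgoal for i k
    apply (simp only: insert_iff empty_iff simp_thms)
    apply (elim disjE; simp)
    using d apply (simp_all add: divide_simps)
    done
  subgoal for i k
    apply (simp only: insert_iff empty_iff simp_thms)
    apply (elim disjE; simp)
    using d apply (simp_all add: divide_simps)
    done
  subgoal for i k by auto
  done


locale cone =
  fixes U :: "pt2 set"
    and g :: "pt2 \<Rightarrow> nat \<Rightarrow> nat \<Rightarrow> real"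
    and phi :: "pt2 \<Rightarrow> nat \<Rightarrow> real"
    and rho e :: "pt3 \<Rightarrow> real"
    and V :: "pt3 \<Rightarrow> nat \<Rightarrow> real"
    and Pfun :: "real \<Rightarrow> real \<Rightarrow> real"
    and G :: "pt3 \<Rightarrow> nat \<Rightarrow> nat \<Rightarrow> real"
    and D :: "pt3 set"
    and sG :: "pt3 \<Rightarrow> real"
    and Gi :: "pt3 \<Rightarrow> nat \<Rightarrow> nat \<Rightarrow> real"
    and P :: "pt3 \<Rightarrow> real"
    and E :: "pt3 \<Rightarrow> real"
    and rho2 :: "pt2 \<Rightarrow> real"
    and e2 :: "pt2 \<Rightarrow> real"
    and v :: "pt2 \<Rightarrow> nat \<Rightarrow> real"
    and V3 :: "pt2 \<Rightarrow> real"
    and sg :: "pt2 \<Rightarrow> real"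
    and gi :: "pt2 \<Rightarrow> nat \<Rightarrow> nat \<Rightarrow> real"
    and qc2 :: "pt2 \<Rightarrow> real"
    and P2 :: "pt2 \<Rightarrow> real"
    and E2 :: "pt2 \<Rightarrow> real"
  assumes G_def: "G = cone_metric g"
    and D_def: "D = {(a, b, r). (a, b) \<in> U \<and> r > 0}"
    and sG_def: "sG = (\<lambda>x. sqrt (detn 3 (G x)))"
    and Gi_def: "Gi = (\<lambda>x. inv_metric 3 (G x))"
    and P_def: "P = (\<lambda>x. Pfun (rho x) (e x))"
    and E_def: "E = (\<lambda>x. e x + (1/2) * (\<Sum>i\<in>{1..3}. \<Sum>j\<in>{1..3}. G x i j * V x i * V x j))"
    and rho2_def: "rho2 = (\<lambda>xi. rho (fst xi, snd xi, 1))"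
    and e2_def: "e2 = (\<lambda>xi. e (fst xi, snd xi, 1))"
    and v_def: "v = (\<lambda>xi b. 1 * V (fst xi, snd xi, 1) b)"
    and V3_def: "V3 = (\<lambda>xi. V (fst xi, snd xi, 1) 3)"
    and sg_def: "sg = (\<lambda>xi. sqrt (detn 2 (g xi)))"
    and gi_def: "gi = (\<lambda>xi. inv_metric 2 (g xi))"
    and qc2_def: "qc2 = (\<lambda>xi. (\<Sum>a\<in>{1..2}. \<Sum>b\<in>{1..2}. g xi a b * v xi a * v xi b))"
    and P2_def: "P2 = (\<lambda>xi. Pfun (rho2 xi) (e2 xi))"
    and E2_def: "E2 = (\<lambda>xi. e2 xi + (1/2) * (qc2 xi + (V3 xi)\<^sup>2))"
    and U_open: "open U"
    (* g is the metric of the unit sphere in the surface coordinates xi *)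
    and phi_diff: "\<forall>k\<in>{1..3}. \<forall>xi\<in>U. (\<lambda>y. phi y k) differentiable (at xi)"
    and phi_sphere: "\<forall>xi\<in>U. (\<Sum>k\<in>{1..3}. (phi xi k)\<^sup>2) = 1"
    and g_phi: "\<forall>xi\<in>U. \<forall>a\<in>{1..2}. \<forall>b\<in>{1..2}.
                  g xi a b = (\<Sum>k\<in>{1..3}. pd2 (\<lambda>y. phi y k) a xi * pd2 (\<lambda>y. phi y k) b xi)"
    and g_pos: "\<forall>xi\<in>U. detn 2 (g xi) > 0"
    and g_diff: "\<forall>a\<in>{1..2}. \<forall>b\<in>{1..2}. \<forall>xi\<in>U. (\<lambda>y. g y a b) differentiable (at xi)"
    and rho_diff: "\<forall>x\<in>D. rho differentiable (at x)"
    and e_diff: "\<forall>x\<in>D. e differentiable (at x)"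
    and V_diff: "\<forall>i\<in>{1..3}. \<forall>x\<in>D. (\<lambda>y. V y i) differentiable (at x)"
    and P_diff: "\<forall>z. (\<lambda>z. Pfun (fst z) (snd z)) differentiable (at z)"
    and rho_pos: "\<forall>x\<in>D. rho x > 0"
    (* conical assumption: vanishing covariant derivative in the radial direction *)
    and conical_rho: "\<forall>x\<in>D. pd3 rho 3 x = 0"
    and conical_e: "\<forall>x\<in>D. pd3 e 3 x = 0"
    and conical_V: "\<forall>x\<in>D. \<forall>i\<in>{1..3}.
                      pd3 (\<lambda>y. V y i) 3 x + (\<Sum>k\<in>{1..3}. Gam3 G x i 3 k * V x k) = 0"
begin

lemma memD: "(a, b, r) \<in> D \<longleftrightarrow> (a, b) \<in> U \<and> r > 0"
  by (simp add: D_def)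

lemma D_open: "open D"
proof -
  have "D = (\<lambda>y. (fst y, fst (snd y))) -` U \<inter> (\<lambda>y. snd (snd y)) -` {0<..}"
    by (auto simp: D_def)
  moreover have "open ((\<lambda>y::pt3. (fst y, fst (snd y))) -` U)"
    by (rule open_vimage[OF U_open]) (auto intro!: continuous_intros)
  moreover have "open ((\<lambda>y::pt3. snd (snd y)) -` {0<..})"
    by (rule open_vimage) (auto intro!: continuous_intros)
  ultimately show ?thesis by auto
qed

lemma g_sym: "\<xi> \<in> U \<Longrightarrow> g \<xi> 2 1 = g \<xi> 1 2"
  using g_phi by (auto simp: mult.commute)

lemma det_pos: "\<xi> \<in> U \<Longrightarrow> g \<xi> 1 1 * g \<xi> 2 2 - g \<xi> 1 2 * g \<xi> 1 2 > 0"
  using g_pos g_sym by (simp add: detn2)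

lemma gi_eq: assumes "\<xi> \<in> U"
  shows "gi \<xi> = (\<lambda>i k. if i = 1 \<and> k = 1 then g \<xi> 2 2 / (g \<xi> 1 1 * g \<xi> 2 2 - g \<xi> 1 2 * g \<xi> 1 2)
    else if i = 1 \<and> k = 2 then - g \<xi> 1 2 / (g \<xi> 1 1 * g \<xi> 2 2 - g \<xi> 1 2 * g \<xi> 1 2)
    else if i = 2 \<and> k = 1 then - g \<xi> 1 2 / (g \<xi> 1 1 * g \<xi> 2 2 - g \<xi> 1 2 * g \<xi> 1 2)
    else if i = 2 \<and> k = 2 then g \<xi> 1 1 / (g \<xi> 1 1 * g \<xi> 2 2 - g \<xi> 1 2 * g \<xi> 1 2) else 0)"
proof -
  have d: "g \<xi> 1 1 * g \<xi> 2 2 - g \<xi> 1 2 * g \<xi> 2 1 \<noteq> 0" using det_pos[OF assms] g_sym[OF assms] by simp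
  show ?thesis unfolding gi_def inv2[OF d] g_sym[OF assms] ..
qed

lemma detg: "\<xi> \<in> U \<Longrightarrow> detn 2 (g \<xi>) = g \<xi> 1 1 * g \<xi> 2 2 - g \<xi> 1 2 * g \<xi> 1 2"
  using g_sym by (simp add: detn2)

lemma sg_pos: "\<xi> \<in> U \<Longrightarrow> sg \<xi> > 0"
  using g_pos by (simp add: sg_def)

lemma G_ent: "G (a, b, r) i j = (if i \<in> {1,2} \<and> j \<in> {1,2} then r\<^sup>2 * g (a, b) i j else if i = 3 \<and> j = 3 then 1 else 0)"
  by (simp add: G_def cone_metric_def)

lemma sG_eq: "sG (a, b, r) = r\<^sup>2 * sg (a, b)"
proof -
  have "detn 3 (G (a, b, r)) = (r\<^sup>2)\<^sup>2 * detn 2 (g (a, b))"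
    by (simp add: detn3 detn2 G_ent algebra_simps power2_eq_square)
  moreover have "sqrt ((r\<^sup>2)\<^sup>2) = r\<^sup>2" by (simp only: real_sqrt_abs) simp
  ultimately show ?thesis by (simp only: sG_def sg_def real_sqrt_mult)
qed

lemma Gi_eq: assumes "(a, b) \<in> U" "r > 0"
  shows "Gi (a, b, r) = (\<lambda>i k. if i \<in> {1,2} \<and> k \<in> {1,2} then gi (a, b) i k / r\<^sup>2 else if i = 3 \<and> k = 3 then 1 else 0)"
proof -
  have d: "g (a,b) 1 1 * g (a,b) 2 2 - g (a,b) 1 2 * g (a,b) 1 2 \<noteq> 0" using det_pos[OF assms(1)] by simp
  have s: "g (a,b) 2 1 = g (a,b) 1 2" using g_sym[OF assms(1)] .
  have s': "g (a,b) 2 (Suc 0) = g (a,b) (Suc 0) 2" using s by simp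
  show ?thesis unfolding Gi_def
    apply (rule inv_metric_eq3)
    subgoal for i k
      apply (simp only: insert_iff empty_iff simp_thms)
      apply (elim disjE; simp add: G_ent gi_eq[OF assms(1)] s s')
      using d assms(2) apply (simp_all add: divide_simps)
      done
    subgoal for i k
      apply (simp only: insert_iff empty_iff simp_thms)
      apply (elim disjE; simp add: G_ent gi_eq[OF assms(1)] s s')
      using d assms(2) apply (simp_all add: divide_simps)
      done
    subgoal for i k by auto
    done
qed

lemma pdG12: assumes "(a, b) \<in> U" "l \<in> {1,2}" "k \<in> {1,2}" "j \<in> {1,2}"
  shows "pd3 (\<lambda>y. G y l k) j (a, b, r) = r\<^sup>2 * pd2 (\<lambda>y. g y l k) j (a, b)"
proof -
  have e: "(\<lambda>y. G y l k) = (\<lambda>y. (snd (snd y))\<^sup>2 * g (fst y, fst (snd y)) l k)"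
    using assms by (auto simp: G_def cone_metric_def)
  have "(\<lambda>y. g y l k) differentiable (at (a, b))" using g_diff assms by auto
  from pd3_12[where c="\<lambda>s. s\<^sup>2" and F="\<lambda>z. g z l k", OF assms(4), of "(a, b, r)"] this
  show ?thesis unfolding e by simp
qed

lemma pdG3: assumes "l \<in> {1,2}" "k \<in> {1,2}"
  shows "pd3 (\<lambda>y. G y l k) 3 (a, b, r) = 2 * r * g (a, b) l k"
proof -
  have e: "(\<lambda>y. G y l k) = (\<lambda>y. (snd (snd y))\<^sup>2 * g (fst y, fst (snd y)) l k)"
    using assms by (auto simp: G_def cone_metric_def)
  have "((\<lambda>s. s\<^sup>2) has_real_derivative 2 * r) (at r)"
    by (auto intro!: derivative_eq_intros)
  from pd3_3[where c="\<lambda>s. s\<^sup>2" and F="\<lambda>z. g z l k" and x="(a, b, r)", simplified, OF this]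
  show ?thesis unfolding e by simp
qed

lemma pdGc: assumes "\<not> (l \<in> {1,2} \<and> k \<in> {1,2})"
  shows "pd3 (\<lambda>y. G y l k) j x = 0"
proof -
  have e: "(\<lambda>y. G y l k) = (\<lambda>y. if l = 3 \<and> k = 3 then 1 else 0)"
    using assms by (auto simp: G_def cone_metric_def)
  show ?thesis unfolding e by (rule pd3_const)
qed

lemma invG: assumes "(a, b) \<in> U" "r > 0"
  shows "inv_metric 3 (G (a, b, r)) = (\<lambda>i k. if i \<in> {1,2} \<and> k \<in> {1,2} then gi (a, b) i k / r\<^sup>2 else if i = 3 \<and> k = 3 then 1 else 0)"
  using Gi_eq[OF assms] by (simp add: Gi_def)

lemma invg: "inv_metric 2 (g \<xi>) = gi \<xi>"
  by (simp add: gi_def)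

lemma GamA: assumes "(a, b) \<in> U" "r > 0" "i \<in> {1,2}" "j \<in> {1,2}" "k \<in> {1,2}"
  shows "Gam3 G (a, b, r) i j k = Gam2 g (a, b) i j k"
  unfolding christoffel_def sum_13 sum_12 invG[OF assms(1,2)] invg
  using assms by (auto simp: pdG12 field_simps)

lemma pow4: "(x::real) ^ 4 = x * x * (x * x)"
  by (simp add: eval_nat_numeral)

lemma g_sym1: "\<xi> \<in> U \<Longrightarrow> g \<xi> 2 (Suc 0) = g \<xi> (Suc 0) 2"
  using g_sym by simp

lemma gig: assumes "\<xi> \<in> U" "i \<in> {1,2}" "j \<in> {1,2}"
  shows "gi \<xi> i 1 * g \<xi> 1 j + gi \<xi> i 2 * g \<xi> 2 j = (if i = j then 1 else 0)"
    "g \<xi> i 1 * gi \<xi> 1 j + g \<xi> i 2 * gi \<xi> 2 j = (if i = j then 1 else 0)"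
proof -
  have d: "g \<xi> 1 1 * g \<xi> 2 2 - g \<xi> 1 2 * g \<xi> 1 2 \<noteq> 0" using det_pos[OF assms(1)] by simp
  have s: "g \<xi> 2 1 = g \<xi> 1 2" using g_sym[OF assms(1)] .
  have c: "i = 1 \<or> i = 2" "j = 1 \<or> j = 2" using assms by auto
  show "gi \<xi> i 1 * g \<xi> 1 j + gi \<xi> i 2 * g \<xi> 2 j = (if i = j then 1 else 0)"
    using c d s g_sym1[OF assms(1)] unfolding gi_eq[OF assms(1)] by (elim disjE) (simp_all add: divide_simps)
  show "g \<xi> i 1 * gi \<xi> 1 j + g \<xi> i 2 * gi \<xi> 2 j = (if i = j then 1 else 0)"
    using c d s g_sym1[OF assms(1)] unfolding gi_eq[OF assms(1)] by (elim disjE) (simp_all add: divide_simps)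
qed

lemma GamB1: assumes "(a, b) \<in> U" "r > 0" "i \<in> {1,2}" "j \<in> {1,2}"
  shows "Gam3 G (a, b, r) i j 3 = (if i = j then 1 / r else 0)"
proof -
  have "Gam3 G (a, b, r) i j 3 = (gi (a, b) i 1 * g (a, b) 1 j + gi (a, b) i 2 * g (a, b) 2 j) / r"
    unfolding christoffel_def sum_13 invG[OF assms(1,2)] using assms
    by (simp add: pdG3 pdGc field_simps power2_eq_square)
  then show ?thesis using gig(1)[OF assms(1,3,4)] by simp
qed

lemma GamB2: assumes "(a, b) \<in> U" "r > 0" "i \<in> {1,2}" "j \<in> {1,2}"
  shows "Gam3 G (a, b, r) i 3 j = (if i = j then 1 / r else 0)"
proof -
  have "Gam3 G (a, b, r) i 3 j = (gi (a, b) i 1 * g (a, b) 1 j + gi (a, b) i 2 * g (a, b) 2 j) / r"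
    unfolding christoffel_def sum_13 invG[OF assms(1,2)] using assms
    by (simp add: pdG3 pdGc field_simps power2_eq_square)
  then show ?thesis using gig(1)[OF assms(1,3,4)] by simp
qed

lemma GamC: assumes "(a, b) \<in> U" "r > 0" "i \<in> {1,2}"
  shows "Gam3 G (a, b, r) i 3 3 = 0"
  unfolding christoffel_def sum_13 invG[OF assms(1,2)] using assms
  by (simp add: pdGc)

lemma GamD: assumes "(a, b) \<in> U" "r > 0" "j \<in> {1,2}" "k \<in> {1,2}"
  shows "Gam3 G (a, b, r) 3 j k = - r * g (a, b) j k"
  unfolding christoffel_def sum_13 invG[OF assms(1,2)] using assms
  by (simp add: pdG3 pdGc)

lemma GamE: assumes "(a, b) \<in> U" "r > 0"
  shows "Gam3 G (a, b, r) 3 3 k = 0" "Gam3 G (a, b, r) 3 k 3 = 0"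
  unfolding christoffel_def sum_13 invG[OF assms(1,2)] using assms
  by (simp_all add: pdGc)

lemma const_pos:
  fixes \<phi> :: "real \<Rightarrow> real"
  assumes "\<And>u. u > 0 \<Longrightarrow> (\<phi> has_real_derivative 0) (at u)" "r > 0"
  shows "\<phi> r = \<phi> 1"
proof -
  have "\<exists>c. \<forall>x\<in>{0<..}. \<phi> x = c"
    by (rule has_field_derivative_zero_constant) (auto intro: has_field_derivative_at_within assms(1))
  then obtain c where "\<forall>x\<in>{0<..}. \<phi> x = c" by blast
  then show ?thesis using assms(2) by simp
qed

lemma rho_eq: assumes "(a, b) \<in> U" "r > 0" shows "rho (a, b, r) = rho2 (a, b)"
proof -
  have "rho (a, b, r) = rho (a, b, 1)"
  proof (rule const_pos[where \<phi>="\<lambda>u. rho (a, b, u)"])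
    fix u :: real assume "u > 0"
    then have "(a, b, u) \<in> D" using assms by (simp add: memD)
    then show "((\<lambda>u. rho (a, b, u)) has_real_derivative 0) (at u)"
      using pd3_3_DERIV[of rho a b u] rho_diff conical_rho by auto
  qed (rule assms(2))
  then show ?thesis by (simp add: rho2_def)
qed

lemma e_eq: assumes "(a, b) \<in> U" "r > 0" shows "e (a, b, r) = e2 (a, b)"
proof -
  have "e (a, b, r) = e (a, b, 1)"
  proof (rule const_pos[where \<phi>="\<lambda>u. e (a, b, u)"])
    fix u :: real assume "u > 0"
    then have "(a, b, u) \<in> D" using assms by (simp add: memD)
    then show "((\<lambda>u. e (a, b, u)) has_real_derivative 0) (at u)"
      using pd3_3_DERIV[of e a b u] e_diff conical_e by auto
  qed (rule assms(2))
  then show ?thesis by (simp add: e2_def)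
qed

lemma V3_eq: assumes "(a, b) \<in> U" "r > 0" shows "V (a, b, r) 3 = V3 (a, b)"
proof -
  have "V (a, b, r) 3 = V (a, b, 1) 3"
  proof (rule const_pos[where \<phi>="\<lambda>u. V (a, b, u) 3"])
    fix u :: real assume "u > 0"
    then have D: "(a, b, u) \<in> D" using assms by (simp add: memD)
    have "pd3 (\<lambda>y. V y 3) 3 (a, b, u) = 0"
      using conical_V[rule_format, OF D, of 3] assms \<open>u > 0\<close> unfolding sum_13 by (simp add: GamE)
    then show "((\<lambda>u. V (a, b, u) 3) has_real_derivative 0) (at u)"
      using pd3_3_DERIV[of "\<lambda>y. V y 3" a b u] V_diff D by auto
  qed (rule assms(2))
  then show ?thesis by (simp add: V3_def)
qed

lemma Va_eq: assumes "(a, b) \<in> U" "r > 0" "i \<in> {1,2}" shows "V (a, b, r) i = v (a, b) i / r"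
proof -
  have "r * V (a, b, r) i = 1 * V (a, b, 1) i"
  proof (rule const_pos[where \<phi>="\<lambda>u. u * V (a, b, u) i"])
    fix u :: real assume "u > 0"
    then have D: "(a, b, u) \<in> D" using assms by (simp add: memD)
    have i3: "i \<in> {1..3}" using assms by auto
    have "(\<Sum>k\<in>{1..3}. Gam3 G (a, b, u) i 3 k * V (a, b, u) k) = V (a, b, u) i / u"
      unfolding sum_13 using assms(1,3) \<open>u > 0\<close> by (auto simp: GamB2 GamC)
    then have p: "pd3 (\<lambda>y. V y i) 3 (a, b, u) = - V (a, b, u) i / u"
      using conical_V D i3 by force
    have "((\<lambda>u. V (a, b, u) i) has_real_derivative pd3 (\<lambda>y. V y i) 3 (a, b, u)) (at u)"
      using pd3_3_DERIV[of "\<lambda>y. V y i" a b u] V_diff D i3 by auto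
    from DERIV_mult[OF DERIV_ident this]
    show "((\<lambda>u. u * V (a, b, u) i) has_real_derivative 0) (at u)"
      using p \<open>u > 0\<close> by simp
  qed (rule assms(2))
  then show ?thesis using assms(2) by (simp add: v_def field_simps)
qed

lemma diff_open:
  assumes "f differentiable (at x)" "open S" "x \<in> S" "\<And>y. y \<in> S \<Longrightarrow> f y = f' y"
  shows "f' differentiable (at x)"
  using assms has_derivative_transform_within_open[of f _ x UNIV S f'] unfolding differentiable_def by auto

lemma lift_diff:
  fixes f :: "pt3 \<Rightarrow> real"
  assumes "\<xi> \<in> U" "\<forall>x\<in>D. f differentiable (at x)"
  shows "(\<lambda>y. f (fst y, snd y, 1)) differentiable (at \<xi>)"
proof -
  have "(fst \<xi>, snd \<xi>, 1) \<in> D" using assms(1) by (simp add: D_def)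
  then have "f differentiable (at ((\<lambda>y::pt2. (fst y, snd y, 1::real)) \<xi>))" using assms(2) by simp
  moreover have "(\<lambda>y::pt2. (fst y, snd y, 1::real)) differentiable (at \<xi>)" 
  proof -
    have "fst differentiable (at \<xi>)" by (rule bounded_linear_imp_differentiable[OF bounded_linear_fst])
    moreover have "snd differentiable (at \<xi>)" by (rule bounded_linear_imp_differentiable[OF bounded_linear_snd])
    ultimately show ?thesis by (intro differentiable_Pair differentiable_const) (auto simp: fun_eq_iff)
  qed
  ultimately show ?thesis by (rule differentiable_compose)
qed

lemma rho2_diff: "\<xi> \<in> U \<Longrightarrow> rho2 differentiable (at \<xi>)"
  unfolding rho2_def using lift_diff rho_diff by blast

lemma e2_diff: "\<xi> \<in> U \<Longrightarrow> e2 differentiable (at \<xi>)"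
  unfolding e2_def using lift_diff e_diff by blast

lemma v_diff: "\<xi> \<in> U \<Longrightarrow> i \<in> {1..3} \<Longrightarrow> (\<lambda>y. v y i) differentiable (at \<xi>)"
  unfolding v_def using lift_diff[of \<xi> "\<lambda>y. V y i"] V_diff by simp

lemma V3_diff: "\<xi> \<in> U \<Longrightarrow> V3 differentiable (at \<xi>)"
  unfolding V3_def using lift_diff[of \<xi> "\<lambda>y. V y 3"] V_diff by simp

lemma gd: "\<xi> \<in> U \<Longrightarrow> i \<in> {1,2} \<Longrightarrow> k \<in> {1,2} \<Longrightarrow> (\<lambda>y. g y i k) differentiable (at \<xi>)"
  using g_diff by auto

lemma det_diff: "\<xi> \<in> U \<Longrightarrow> (\<lambda>y. detn 2 (g y)) differentiable (at \<xi>)"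
  unfolding detn2 by (intro derivative_intros gd) auto

lemma sg_diff: "\<xi> \<in> U \<Longrightarrow> sg differentiable (at \<xi>)"
proof -
  assume u: "\<xi> \<in> U"
  have "sqrt differentiable (at ((\<lambda>y. detn 2 (g y)) \<xi>))"
    using DERIV_real_sqrt[of "detn 2 (g \<xi>)"] g_pos u real_differentiable_def by auto
  from differentiable_compose[OF this det_diff[OF u]] show ?thesis by (simp add: sg_def)
qed

lemma gi_diff: assumes "\<xi> \<in> U" "i \<in> {1,2}" "k \<in> {1,2}"
  shows "(\<lambda>y. gi y i k) differentiable (at \<xi>)"
proof -
  let ?d = "\<lambda>y. g y 1 1 * g y 2 2 - g y 1 2 * g y 1 2"
  have dn: "?d \<xi> \<noteq> 0" using det_pos[OF assms(1)] by simp
  have dd: "?d differentiable (at \<xi>)" by (intro derivative_intros gd assms(1)) auto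
  let ?f = "\<lambda>y. if i = 1 \<and> k = 1 then g y 2 2 / ?d y
    else if i = 1 \<and> k = 2 then - g y 1 2 / ?d y
    else if i = 2 \<and> k = 1 then - g y 1 2 / ?d y
    else if i = 2 \<and> k = 2 then g y 1 1 / ?d y else 0"
  have "?f differentiable (at \<xi>)"
    using assms(2,3) dn dd gd[OF assms(1)]
    by (auto intro!: differentiable_divide differentiable_minus)
  then show ?thesis
    by (rule diff_open[OF _ U_open assms(1)]) (simp add: gi_eq)
qed

lemma P2_diff: assumes "\<xi> \<in> U" shows "P2 differentiable (at \<xi>)"
proof -
  have "(\<lambda>z. Pfun (fst z) (snd z)) differentiable (at ((\<lambda>y. (rho2 y, e2 y)) \<xi>))" using P_diff by blast
  moreover have "(\<lambda>y. (rho2 y, e2 y)) differentiable (at \<xi>)"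
    using rho2_diff[OF assms] e2_diff[OF assms] by (intro differentiable_Pair)
  ultimately show ?thesis using differentiable_compose by (fastforce simp: P2_def)
qed

lemma qc2_diff: assumes "\<xi> \<in> U" shows "qc2 differentiable (at \<xi>)"
  unfolding qc2_def sum_12 using assms
  by (intro derivative_intros gd v_diff) auto

lemma E2_diff: assumes "\<xi> \<in> U" shows "E2 differentiable (at \<xi>)"
  unfolding E2_def using assms
  by (intro derivative_intros e2_diff qc2_diff V3_diff)

lemma P_eq: "(a, b) \<in> U \<Longrightarrow> r > 0 \<Longrightarrow> P (a, b, r) = P2 (a, b)"
  by (simp add: P_def P2_def rho_eq e_eq)

lemma E_eq: assumes "(a, b) \<in> U" "r > 0" shows "E (a, b, r) = E2 (a, b)"
proof -
  have "E (a, b, r) = e (a, b, r) + (1/2) * (\<Sum>i\<in>{1..3}. \<Sum>j\<in>{1..3}. G (a, b, r) i j * V (a, b, r) i * V (a, b, r) j)"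
    by (simp add: E_def)
  also have "\<dots> = e2 (a, b) + (1/2) * ((\<Sum>i\<in>{1..2}. \<Sum>j\<in>{1..2}. g (a, b) i j * v (a, b) i * v (a, b) j) + (V3 (a, b))\<^sup>2)"
    unfolding sum_13 sum_12 using assms by (simp add: G_ent e_eq Va_eq V3_eq field_simps power2_eq_square)
  finally show ?thesis by (simp add: E2_def qc2_def)
qed

lemma lift12:
  fixes f :: "pt3 \<Rightarrow> real" and F :: "pt2 \<Rightarrow> real"
  assumes "(a, b) \<in> U" "r > 0" "j \<in> {1,2}"
    and "\<And>a' b' r'. (a', b') \<in> U \<Longrightarrow> r' > 0 \<Longrightarrow> f (a', b', r') = c r' * F (a', b')"
    and "F differentiable (at (a, b))"
  shows "pd3 f j (a, b, r) = c r * pd2 F j (a, b)"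
proof -
  have "pd3 f j (a, b, r) = pd3 (\<lambda>y. c (snd (snd y)) * F (fst y, fst (snd y))) j (a, b, r)"
  proof (rule pd3_cong_open[OF D_open])
    show "(a, b, r) \<in> D" using assms by (simp add: memD)
    show "\<forall>y\<in>D. f y = c (snd (snd y)) * F (fst y, fst (snd y))"
      using assms(4) by (auto simp: D_def)
  qed
  also have "\<dots> = c r * pd2 F j (a, b)"
    using pd3_12[of j F "(a, b, r)" c] assms(3,5) by simp
  finally show ?thesis .
qed

lemma lift3:
  fixes f :: "pt3 \<Rightarrow> real" and F :: "pt2 \<Rightarrow> real"
  assumes "(a, b) \<in> U" "r > 0"
    and "\<And>a' b' r'. (a', b') \<in> U \<Longrightarrow> r' > 0 \<Longrightarrow> f (a', b', r') = c r' * F (a', b')"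
    and "(c has_real_derivative c') (at r)"
  shows "pd3 f 3 (a, b, r) = c' * F (a, b)"
proof -
  have "pd3 f 3 (a, b, r) = pd3 (\<lambda>y. c (snd (snd y)) * F (fst y, fst (snd y))) 3 (a, b, r)"
  proof (rule pd3_cong_open[OF D_open])
    show "(a, b, r) \<in> D" using assms by (simp add: memD)
    show "\<forall>y\<in>D. f y = c (snd (snd y)) * F (fst y, fst (snd y))"
      using assms(3) by (auto simp: D_def)
  qed
  also have "\<dots> = c' * F (a, b)"
    using pd3_3[of c c' "(a, b, r)" F] assms(4) by simp
  finally show ?thesis .
qed

lemma cdiv1_simp: "cdiv_dens1 M W x = (\<Sum>j\<in>{1..3}. pd3 (\<lambda>y. W y j) j x)"
proof -
  have "(\<Sum>j\<in>{1..3::nat}. \<Sum>k\<in>{1..3::nat}. christoffel 3 M pd3 x k k j * W x j)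
      = (\<Sum>k\<in>{1..3::nat}. \<Sum>j\<in>{1..3::nat}. christoffel 3 M pd3 x k k j * W x j)"
    by (rule sum.swap)
  then show ?thesis
    unfolding cdiv_dens1_def sum.distrib sum_subtractf by simp
qed

lemma cdiv2_simp: "cdiv_dens2 M T x i = (\<Sum>j\<in>{1..3}. pd3 (\<lambda>y. T y i j) j x)
   + (\<Sum>j\<in>{1..3}. \<Sum>k\<in>{1..3}. christoffel 3 M pd3 x i j k * T x k j)"
proof -
  have "(\<Sum>j\<in>{1..3::nat}. \<Sum>k\<in>{1..3::nat}. christoffel 3 M pd3 x k k j * T x i j)
      = (\<Sum>k\<in>{1..3::nat}. \<Sum>j\<in>{1..3::nat}. christoffel 3 M pd3 x k k j * T x i j)"
    by (rule sum.swap)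
  then show ?thesis
    unfolding cdiv_dens2_def sum.distrib sum_subtractf by simp
qed

lemma j12: "(1::nat) \<in> {1,2}" "(2::nat) \<in> {1,2}" by simp_all

lemma ds: "\<xi> \<in> U \<Longrightarrow> rho2 differentiable (at \<xi>) \<and> e2 differentiable (at \<xi>) \<and> sg differentiable (at \<xi>)
   \<and> V3 differentiable (at \<xi>) \<and> P2 differentiable (at \<xi>) \<and> E2 differentiable (at \<xi>)"
  using rho2_diff e2_diff sg_diff V3_diff P2_diff E2_diff by blast

lemma cont_j: assumes "(a, b) \<in> U" "r > 0" "j \<in> {1,2}"
  shows "pd3 (\<lambda>y. rho y * sG y * V y j) j (a, b, r) = r * pd2 (\<lambda>y. rho2 y * sg y * v y j) j (a, b)"
proof (rule lift12[where c="\<lambda>s. s", OF assms])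
  fix a' b' r' :: real assume "(a', b') \<in> U" "r' > 0"
  then show "rho (a', b', r') * sG (a', b', r') * V (a', b', r') j = r' * (rho2 (a', b') * sg (a', b') * v (a', b') j)"
    using assms(3) by (simp add: rho_eq sG_eq Va_eq power2_eq_square)
next
  show "(\<lambda>y. rho2 y * sg y * v y j) differentiable (at (a, b))"
    using ds[OF assms(1)] v_diff[OF assms(1), of j] assms(3) by (auto intro!: differentiable_mult)
qed

lemma cont_3: assumes "(a, b) \<in> U" "r > 0"
  shows "pd3 (\<lambda>y. rho y * sG y * V y 3) 3 (a, b, r) = 2 * r * (rho2 (a, b) * sg (a, b) * V3 (a, b))"
proof (rule lift3[where c="\<lambda>s. s\<^sup>2", OF assms])
  fix a' b' r' :: real assume "(a', b') \<in> U" "r' > 0"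
  then show "rho (a', b', r') * sG (a', b', r') * V (a', b', r') 3 = r'\<^sup>2 * (rho2 (a', b') * sg (a', b') * V3 (a', b'))"
    by (simp add: rho_eq sG_eq V3_eq)
next
  show "((\<lambda>s. s\<^sup>2) has_real_derivative 2 * r) (at r)" by (auto intro!: derivative_eq_intros)
qed

lemma cont_pt: assumes "(a, b) \<in> U" "r > 0"
  shows "cdiv_dens1 G (\<lambda>y j. rho y * sG y * V y j) (a, b, r) =
    r * ((\<Sum>c\<in>{1..2}. pd2 (\<lambda>y. rho2 y * sg y * v y c) c (a, b)) + 2 * rho2 (a, b) * sg (a, b) * V3 (a, b))"
proof -
  have j1: "(1::nat) \<in> {1,2}" and j2: "(2::nat) \<in> {1,2}" by simp_all
  show ?thesis
    unfolding cdiv1_simp sum_13 sum_12 cont_j[OF assms j1] cont_j[OF assms j2] cont_3[OF assms]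
    by (simp add: algebra_simps)
qed

lemma en_j: assumes "(a, b) \<in> U" "r > 0" "j \<in> {1,2}"
  shows "pd3 (\<lambda>y. sG y * (rho y * E y + P y) * V y j) j (a, b, r) = r * pd2 (\<lambda>y. sg y * (rho2 y * E2 y + P2 y) * v y j) j (a, b)"
proof (rule lift12[where c="\<lambda>s. s", OF assms])
  fix a' b' r' :: real assume "(a', b') \<in> U" "r' > 0"
  then show "sG (a', b', r') * (rho (a', b', r') * E (a', b', r') + P (a', b', r')) * V (a', b', r') j
      = r' * (sg (a', b') * (rho2 (a', b') * E2 (a', b') + P2 (a', b')) * v (a', b') j)"
    using assms(3) by (simp add: rho_eq sG_eq Va_eq E_eq P_eq power2_eq_square)
next
  show "(\<lambda>y. sg y * (rho2 y * E2 y + P2 y) * v y j) differentiable (at (a, b))"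
    using ds[OF assms(1)] v_diff[OF assms(1), of j] assms(3) by (auto intro!: differentiable_mult differentiable_add)
qed

lemma en_3: assumes "(a, b) \<in> U" "r > 0"
  shows "pd3 (\<lambda>y. sG y * (rho y * E y + P y) * V y 3) 3 (a, b, r) = 2 * r * (sg (a, b) * (rho2 (a, b) * E2 (a, b) + P2 (a, b)) * V3 (a, b))"
proof (rule lift3[where c="\<lambda>s. s\<^sup>2", OF assms])
  fix a' b' r' :: real assume "(a', b') \<in> U" "r' > 0"
  then show "sG (a', b', r') * (rho (a', b', r') * E (a', b', r') + P (a', b', r')) * V (a', b', r') 3
     = r'\<^sup>2 * (sg (a', b') * (rho2 (a', b') * E2 (a', b') + P2 (a', b')) * V3 (a', b'))"
    by (simp add: rho_eq sG_eq V3_eq E_eq P_eq)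
next
  show "((\<lambda>s. s\<^sup>2) has_real_derivative 2 * r) (at r)" by (auto intro!: derivative_eq_intros)
qed

lemma en_pt: assumes "(a, b) \<in> U" "r > 0"
  shows "cdiv_dens1 G (\<lambda>y j. sG y * (rho y * E y + P y) * V y j) (a, b, r) =
    r * ((\<Sum>c\<in>{1..2}. pd2 (\<lambda>y. sg y * (rho2 y * E2 y + P2 y) * v y c) c (a, b))
         + 2 * sg (a, b) * (rho2 (a, b) * E2 (a, b) + P2 (a, b)) * V3 (a, b))"
proof -
  have j1: "(1::nat) \<in> {1,2}" and j2: "(2::nat) \<in> {1,2}" by simp_all
  show ?thesis
    unfolding cdiv1_simp sum_13 sum_12 en_j[OF assms j1] en_j[OF assms j2] en_3[OF assms]
    by (simp add: algebra_simps)
qed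

lemma gi_sym: "\<xi> \<in> U \<Longrightarrow> gi \<xi> 2 1 = gi \<xi> 1 2"
  by (simp add: gi_eq)

lemma gi_sym1: "\<xi> \<in> U \<Longrightarrow> gi \<xi> 2 (Suc 0) = gi \<xi> (Suc 0) 2"
  using gi_sym by simp

lemma gi_d: "\<xi> \<in> U \<Longrightarrow> i \<in> {1,2} \<Longrightarrow> k \<in> {1,2} \<Longrightarrow> (\<lambda>y. gi y i k) differentiable (at \<xi>)"
  using gi_diff by blast

lemma mom_ab: assumes "(a, b) \<in> U" "r > 0" "i \<in> {1,2}" "j \<in> {1,2}"
  shows "pd3 (\<lambda>y. sG y * (rho y * V y i * V y j + Gi y i j * P y)) j (a, b, r) = pd2 (\<lambda>y. sg y * (rho2 y * v y i * v y j + gi y i j * P2 y)) j (a, b)"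
proof -
  have "pd3 (\<lambda>y. sG y * (rho y * V y i * V y j + Gi y i j * P y)) j (a, b, r) = (\<lambda>s. 1) r * pd2 (\<lambda>y. sg y * (rho2 y * v y i * v y j + gi y i j * P2 y)) j (a, b)"
  proof (rule lift12[OF assms(1,2,4)])
    fix a' b' r' :: real assume "(a', b') \<in> U" "r' > 0"
    then show "sG (a', b', r') * (rho (a', b', r') * V (a', b', r') i * V (a', b', r') j + Gi (a', b', r') i j * P (a', b', r')) = (\<lambda>s. 1) r' * (sg (a', b') * (rho2 (a', b') * v (a', b') i * v (a', b') j + gi (a', b') i j * P2 (a', b')))"
      using assms(3,4) by (simp add: rho_eq sG_eq Va_eq P_eq Gi_eq field_simps power2_eq_square)
  next
    show "(\<lambda>y. sg y * (rho2 y * v y i * v y j + gi y i j * P2 y)) differentiable (at (a, b))"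
      using ds[OF assms(1)] v_diff[OF assms(1), of i] v_diff[OF assms(1), of j] gi_d[OF assms(1,3,4)] assms(3,4)
      by (auto intro!: differentiable_mult differentiable_add)
  qed
  then show ?thesis by simp
qed

lemma mom_a3: assumes "(a, b) \<in> U" "r > 0" "i \<in> {1,2}"
  shows "pd3 (\<lambda>y. sG y * (rho y * V y i * V y 3 + Gi y i 3 * P y)) 3 (a, b, r) = 1 * (sg (a, b) * (rho2 (a, b) * v (a, b) i * V3 (a, b)))"
proof (rule lift3[where c="\<lambda>s. s", OF assms(1,2)])
  fix a' b' r' :: real assume "(a', b') \<in> U" "r' > 0"
  then show "sG (a', b', r') * (rho (a', b', r') * V (a', b', r') i * V (a', b', r') 3 + Gi (a', b', r') i 3 * P (a', b', r')) = r' * (sg (a', b') * (rho2 (a', b') * v (a', b') i * V3 (a', b')))"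
    using assms(3) by (auto simp: rho_eq sG_eq Va_eq V3_eq P_eq Gi_eq field_simps power2_eq_square)
next
  show "((\<lambda>s. s) has_real_derivative 1) (at r)" by (rule DERIV_ident)
qed

lemma mom_3b: assumes "(a, b) \<in> U" "r > 0" "j \<in> {1,2}"
  shows "pd3 (\<lambda>y. sG y * (rho y * V y 3 * V y j + Gi y 3 j * P y)) j (a, b, r) = r * pd2 (\<lambda>y. (rho2 y * sg y * v y j) * V3 y) j (a, b)"
proof (rule lift12[where c="\<lambda>s. s", OF assms])
  fix a' b' r' :: real assume "(a', b') \<in> U" "r' > 0"
  then show "sG (a', b', r') * (rho (a', b', r') * V (a', b', r') 3 * V (a', b', r') j + Gi (a', b', r') 3 j * P (a', b', r')) = r' * ((rho2 (a', b') * sg (a', b') * v (a', b') j) * V3 (a', b'))"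
    using assms(3) by (auto simp: rho_eq sG_eq Va_eq V3_eq P_eq Gi_eq field_simps power2_eq_square)
next
  show "(\<lambda>y. (rho2 y * sg y * v y j) * V3 y) differentiable (at (a, b))"
    using ds[OF assms(1)] v_diff[OF assms(1), of j] assms(3)
    by (auto intro!: differentiable_mult)
qed

lemma mom_33: assumes "(a, b) \<in> U" "r > 0"
  shows "pd3 (\<lambda>y. sG y * (rho y * V y 3 * V y 3 + Gi y 3 3 * P y)) 3 (a, b, r) = 2 * r * (sg (a, b) * (rho2 (a, b) * V3 (a, b) * V3 (a, b) + P2 (a, b)))"
proof (rule lift3[where c="\<lambda>s. s\<^sup>2", OF assms(1,2)])
  fix a' b' r' :: real assume "(a', b') \<in> U" "r' > 0"
  then show "sG (a', b', r') * (rho (a', b', r') * V (a', b', r') 3 * V (a', b', r') 3 + Gi (a', b', r') 3 3 * P (a', b', r')) = r'\<^sup>2 * (sg (a', b') * (rho2 (a', b') * V3 (a', b') * V3 (a', b') + P2 (a', b')))"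
    by (simp add: rho_eq sG_eq V3_eq P_eq Gi_eq)
next
  show "((\<lambda>s. s\<^sup>2) has_real_derivative 2 * r) (at r)" by (auto intro!: derivative_eq_intros)
qed

lemma momA_pt: assumes "(a, b) \<in> U" "r > 0" "i \<in> {1,2}"
  shows "cdiv_dens2 G (\<lambda>y i j. sG y * (rho y * V y i * V y j + Gi y i j * P y)) (a, b, r) i =
      (\<Sum>c\<in>{1..2}. pd2 (\<lambda>y. sg y * (rho2 y * v y i * v y c + gi y i c * P2 y)) c (a, b))
    + (\<Sum>c\<in>{1..2}. \<Sum>n\<in>{1..2}. Gam2 g (a, b) i c n * sg (a, b)
          * (rho2 (a, b) * v (a, b) c * v (a, b) n + gi (a, b) c n * P2 (a, b)))
    + 3 * rho2 (a, b) * sg (a, b) * v (a, b) i * V3 (a, b)"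
  unfolding cdiv2_simp sum_13 sum_12 mom_ab[OF assms j12(1)] mom_ab[OF assms j12(2)] mom_a3[OF assms]
  using assms gi_sym[OF assms(1)] gi_sym1[OF assms(1)]
  by (auto simp: GamA GamB1 GamB2 GamC rho_eq sG_eq Va_eq V3_eq P_eq Gi_eq field_simps power2_eq_square)

lemma prod_j: assumes "(a, b) \<in> U" "j \<in> {1,2}"
  shows "pd2 (\<lambda>y. (rho2 y * sg y * v y j) * V3 y) j (a, b) =
     (rho2 (a, b) * sg (a, b) * v (a, b) j) * pd2 V3 j (a, b) + V3 (a, b) * pd2 (\<lambda>y. rho2 y * sg y * v y j) j (a, b)"
proof (rule pd2_mult)
  show "(\<lambda>y. rho2 y * sg y * v y j) differentiable (at (a, b))"
    using ds[OF assms(1)] v_diff[OF assms(1), of j] assms(2) by (auto intro!: differentiable_mult)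
  show "V3 differentiable (at (a, b))" using ds[OF assms(1)] by blast
qed

lemma Tval_ab: assumes "(a, b) \<in> U" "r > 0" "i \<in> {1,2}" "j \<in> {1,2}"
  shows "sG (a, b, r) * (rho (a, b, r) * V (a, b, r) i * V (a, b, r) j + Gi (a, b, r) i j * P (a, b, r))
    = sg (a, b) * (rho2 (a, b) * v (a, b) i * v (a, b) j + gi (a, b) i j * P2 (a, b))"
  using assms by (simp add: rho_eq sG_eq Va_eq P_eq Gi_eq field_simps power2_eq_square)

lemma mom3_pt: assumes "(a, b) \<in> U" "r > 0"
  shows "cdiv_dens2 G (\<lambda>y i j. sG y * (rho y * V y i * V y j + Gi y i j * P y)) (a, b, r) 3 =
      r * V3 (a, b) * ((\<Sum>c\<in>{1..2}. pd2 (\<lambda>y. rho2 y * sg y * v y c) c (a, b)) + 2 * rho2 (a, b) * sg (a, b) * V3 (a, b))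
    + r * rho2 (a, b) * sg (a, b) * ((\<Sum>c\<in>{1..2}. v (a, b) c * pd2 V3 c (a, b)) - qc2 (a, b))"
proof -
  let ?x = "(a, b, r)" and ?\<xi> = "(a, b)"
  let ?T = "\<lambda>y i j. sG y * (rho y * V y i * V y j + Gi y i j * P y)"
  let ?S = "\<lambda>i j. sg ?\<xi> * (rho2 ?\<xi> * v ?\<xi> i * v ?\<xi> j + gi ?\<xi> i j * P2 ?\<xi>)"
  have t1: "g ?\<xi> 1 1 * gi ?\<xi> 1 1 + g ?\<xi> 1 2 * gi ?\<xi> 2 1 = 1"
    using gig(2)[OF assms(1) j12(1) j12(1)] by simp
  have t2: "g ?\<xi> 2 1 * gi ?\<xi> 1 2 + g ?\<xi> 2 2 * gi ?\<xi> 2 2 = 1"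
    using gig(2)[OF assms(1) j12(2) j12(2)] by simp
  have S1: "(\<Sum>j\<in>{1..3}. pd3 (\<lambda>y. ?T y 3 j) j ?x) =
     r * ((\<Sum>c\<in>{1..2}. (rho2 ?\<xi> * sg ?\<xi> * v ?\<xi> c) * pd2 V3 c ?\<xi> + V3 ?\<xi> * pd2 (\<lambda>y. rho2 y * sg y * v y c) c ?\<xi>))
     + 2 * r * (sg ?\<xi> * (rho2 ?\<xi> * V3 ?\<xi> * V3 ?\<xi> + P2 ?\<xi>))"
    unfolding sum_13 sum_12 mom_3b[OF assms j12(1)] mom_3b[OF assms j12(2)] mom_33[OF assms]
      prod_j[OF assms(1) j12(1)] prod_j[OF assms(1) j12(2)]
    by (simp add: algebra_simps)
  have S2: "(\<Sum>j\<in>{1..3}. \<Sum>k\<in>{1..3}. Gam3 G ?x 3 j k * ?T ?x k j) =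
     - r * (g ?\<xi> 1 1 * ?S 1 1 + g ?\<xi> 1 2 * ?S 2 1 + g ?\<xi> 2 1 * ?S 1 2 + g ?\<xi> 2 2 * ?S 2 2)"
    unfolding sum_13 GamD[OF assms j12(1) j12(1)] GamD[OF assms j12(1) j12(2)] GamD[OF assms j12(2) j12(1)]
      GamD[OF assms j12(2) j12(2)] GamE[OF assms]
      Tval_ab[OF assms j12(1) j12(1)] Tval_ab[OF assms j12(1) j12(2)] Tval_ab[OF assms j12(2) j12(1)] Tval_ab[OF assms j12(2) j12(2)]
    by (simp add: algebra_simps)
  have S3: "g ?\<xi> 1 1 * ?S 1 1 + g ?\<xi> 1 2 * ?S 2 1 + g ?\<xi> 2 1 * ?S 1 2 + g ?\<xi> 2 2 * ?S 2 2
     = sg ?\<xi> * rho2 ?\<xi> * qc2 ?\<xi> + sg ?\<xi> * P2 ?\<xi> * ((g ?\<xi> 1 1 * gi ?\<xi> 1 1 + g ?\<xi> 1 2 * gi ?\<xi> 2 1) + (g ?\<xi> 2 1 * gi ?\<xi> 1 2 + g ?\<xi> 2 2 * gi ?\<xi> 2 2))"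
    unfolding qc2_def sum_12 by (simp add: algebra_simps)
  show ?thesis
    unfolding cdiv2_simp S1 S2 S3 t1 t2 sum_12
    by (simp add: algebra_simps)
qed

lemma ball13: "(\<forall>i\<in>{1..3::nat}. Q i) \<longleftrightarrow> Q 1 \<and> Q 2 \<and> Q 3"
proof -
  have "{1..3::nat} = {1,2,3}" by auto
  then show ?thesis by simp
qed

lemma ball12: "(\<forall>i\<in>{1..2::nat}. Q i) \<longleftrightarrow> Q 1 \<and> Q 2"
proof -
  have "{1..2::nat} = {1,2}" by auto
  then show ?thesis by simp
qed

lemma abstr:
  fixes rr pp ss CC M1 M2 VV RR EE :: real
  assumes "rr \<noteq> 0" "pp \<noteq> 0" "ss \<noteq> 0"
  shows "(rr * CC = 0 \<and> (M1 = 0 \<and> M2 = 0 \<and> rr * VV * CC + rr * pp * ss * RR = 0) \<and> rr * EE = 0) \<longleftrightarrow>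
         (CC = 0 \<and> (M1 = 0 \<and> M2 = 0) \<and> RR = 0 \<and> EE = 0)"
  using assms by auto

lemma pt_equiv: assumes "(x1, x2) \<in> U" "r > 0"
  shows "(cdiv_dens1 G (\<lambda>y j. rho y * sG y * V y j) (x1, x2, r) = 0
          \<and> (\<forall>i\<in>{1..3}. cdiv_dens2 G
                (\<lambda>y i j. sG y * (rho y * V y i * V y j + Gi y i j * P y)) (x1, x2, r) i = 0)
          \<and> cdiv_dens1 G (\<lambda>y j. sG y * (rho y * E y + P y) * V y j) (x1, x2, r) = 0)
      \<longleftrightarrow>
         ((\<Sum>b\<in>{1..2}. pd2 (\<lambda>y. rho2 y * sg y * v y b) b (x1, x2))
              + 2 * rho2 (x1, x2) * sg (x1, x2) * V3 (x1, x2) = 0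
          \<and> (\<forall>a\<in>{1..2}.
              (\<Sum>b\<in>{1..2}. pd2 (\<lambda>y. sg y * (rho2 y * v y a * v y b + gi y a b * P2 y)) b (x1, x2))
              + (\<Sum>c\<in>{1..2}. \<Sum>n\<in>{1..2}. Gam2 g (x1, x2) a c n * sg (x1, x2)
                    * (rho2 (x1, x2) * v (x1, x2) c * v (x1, x2) n + gi (x1, x2) c n * P2 (x1, x2)))
              + 3 * rho2 (x1, x2) * sg (x1, x2) * v (x1, x2) a * V3 (x1, x2) = 0)
          \<and> (\<Sum>a\<in>{1..2}. v (x1, x2) a * pd2 V3 a (x1, x2)) - qc2 (x1, x2) = 0
          \<and> (\<Sum>b\<in>{1..2}. pd2 (\<lambda>y. sg y * (rho2 y * E2 y + P2 y) * v y b) b (x1, x2))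
              + 2 * sg (x1, x2) * (rho2 (x1, x2) * E2 (x1, x2) + P2 (x1, x2)) * V3 (x1, x2) = 0)"
proof -
  have r: "r \<noteq> 0" using assms by simp
  have p: "rho2 (x1, x2) \<noteq> 0"
  proof -
    have "(x1, x2, 1) \<in> D" using assms by (simp add: memD)
    then show ?thesis using rho_pos by (auto simp: rho2_def)
  qed
  have s: "sg (x1, x2) \<noteq> 0" using sg_pos[OF assms(1)] by simp
  show ?thesis
    unfolding ball13 ball12 cont_pt[OF assms] en_pt[OF assms] mom3_pt[OF assms]
      momA_pt[OF assms j12(1)] momA_pt[OF assms j12(2)]
    by (rule abstr[OF r p s])
qed

lemma transfer:
  assumes "\<And>x1 x2 r. (x1, x2) \<in> U \<Longrightarrow> r > 0 \<Longrightarrow> (L (x1, x2, r) \<longleftrightarrow> R (x1, x2))"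
  shows "(\<forall>x\<in>D. L x) \<longleftrightarrow> (\<forall>xi\<in>U. R xi)"
proof
  assume H: "\<forall>x\<in>D. L x"
  show "\<forall>xi\<in>U. R xi"
  proof
    fix xi assume xi: "xi \<in> U"
    obtain x1 x2 where e: "xi = (x1, x2)" by (cases xi)
    have "(x1, x2, 1) \<in> D" using xi e by (simp add: memD)
    then have "L (x1, x2, 1)" using H by blast
    then show "R xi" using assms[of x1 x2 1] xi e by simp
  qed
next
  assume H: "\<forall>xi\<in>U. R xi"
  show "\<forall>x\<in>D. L x"
  proof
    fix x assume x: "x \<in> D"
    obtain x1 x2 r where e: "x = (x1, x2, r)" by (cases x)
    have u: "(x1, x2) \<in> U" "r > 0" using x e by (auto simp: memD)
    then have "R (x1, x2)" using H by blast
    then show "L x" using assms[OF u] e by simp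
  qed
qed

lemma main:
  shows "(\<forall>x\<in>D.
            cdiv_dens1 G (\<lambda>y j. rho y * sG y * V y j) x = 0
          \<and> (\<forall>i\<in>{1..3}. cdiv_dens2 G
                (\<lambda>y i j. sG y * (rho y * V y i * V y j + Gi y i j * P y)) x i = 0)
          \<and> cdiv_dens1 G (\<lambda>y j. sG y * (rho y * E y + P y) * V y j) x = 0)
      \<longleftrightarrow>
         (\<forall>xi\<in>U.
            (\<Sum>b\<in>{1..2}. pd2 (\<lambda>y. rho2 y * sg y * v y b) b xi)
              + 2 * rho2 xi * sg xi * V3 xi = 0
          \<and> (\<forall>a\<in>{1..2}.
              (\<Sum>b\<in>{1..2}. pd2 (\<lambda>y. sg y * (rho2 y * v y a * v y b + gi y a b * P2 y)) b xi)
              + (\<Sum>c\<in>{1..2}. \<Sum>n\<in>{1..2}. Gam2 g xi a c n * sg xi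
                    * (rho2 xi * v xi c * v xi n + gi xi c n * P2 xi))
              + 3 * rho2 xi * sg xi * v xi a * V3 xi = 0)
          \<and> (\<Sum>a\<in>{1..2}. v xi a * pd2 V3 a xi) - qc2 xi = 0
          \<and> (\<Sum>b\<in>{1..2}. pd2 (\<lambda>y. sg y * (rho2 y * E2 y + P2 y) * v y b) b xi)
              + 2 * sg xi * (rho2 xi * E2 xi + P2 xi) * V3 xi = 0)"
  by (rule transfer) (rule pt_equiv)

end

theorem mainTheorem1:
  fixes U :: "pt2 set"
    and g :: "pt2 \<Rightarrow> nat \<Rightarrow> nat \<Rightarrow> real"
    and phi :: "pt2 \<Rightarrow> nat \<Rightarrow> real"
    and rho e :: "pt3 \<Rightarrow> real"
    and V :: "pt3 \<Rightarrow> nat \<Rightarrow> real"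
    and Pfun :: "real \<Rightarrow> real \<Rightarrow> real"
    and G :: "pt3 \<Rightarrow> nat \<Rightarrow> nat \<Rightarrow> real"
    and D :: "pt3 set"
    and sG :: "pt3 \<Rightarrow> real"
    and Gi :: "pt3 \<Rightarrow> nat \<Rightarrow> nat \<Rightarrow> real"
    and P :: "pt3 \<Rightarrow> real"
    and E :: "pt3 \<Rightarrow> real"
    and rho2 :: "pt2 \<Rightarrow> real"
    and e2 :: "pt2 \<Rightarrow> real"
    and v :: "pt2 \<Rightarrow> nat \<Rightarrow> real"
    and V3 :: "pt2 \<Rightarrow> real"
    and sg :: "pt2 \<Rightarrow> real"
    and gi :: "pt2 \<Rightarrow> nat \<Rightarrow> nat \<Rightarrow> real"
    and qc2 :: "pt2 \<Rightarrow> real"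
    and P2 :: "pt2 \<Rightarrow> real"
    and E2 :: "pt2 \<Rightarrow> real"
  assumes G_def: "G = cone_metric g"
    and D_def: "D = {(a, b, r). (a, b) \<in> U \<and> r > 0}"
    and sG_def: "sG = (\<lambda>x. sqrt (detn 3 (G x)))"
    and Gi_def: "Gi = (\<lambda>x. inv_metric 3 (G x))"
    and P_def: "P = (\<lambda>x. Pfun (rho x) (e x))"
    and E_def: "E = (\<lambda>x. e x + (1/2) * (\<Sum>i\<in>{1..3}. \<Sum>j\<in>{1..3}. G x i j * V x i * V x j))"
    and rho2_def: "rho2 = (\<lambda>xi. rho (fst xi, snd xi, 1))"
    and e2_def: "e2 = (\<lambda>xi. e (fst xi, snd xi, 1))"
    and v_def: "v = (\<lambda>xi b. 1 * V (fst xi, snd xi, 1) b)"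
    and V3_def: "V3 = (\<lambda>xi. V (fst xi, snd xi, 1) 3)"
    and sg_def: "sg = (\<lambda>xi. sqrt (detn 2 (g xi)))"
    and gi_def: "gi = (\<lambda>xi. inv_metric 2 (g xi))"
    and qc2_def: "qc2 = (\<lambda>xi. (\<Sum>a\<in>{1..2}. \<Sum>b\<in>{1..2}. g xi a b * v xi a * v xi b))"
    and P2_def: "P2 = (\<lambda>xi. Pfun (rho2 xi) (e2 xi))"
    and E2_def: "E2 = (\<lambda>xi. e2 xi + (1/2) * (qc2 xi + (V3 xi)\<^sup>2))"
    and U_open: "open U"
    (* g is the metric of the unit sphere in the surface coordinates xi *)
    and phi_diff: "\<forall>k\<in>{1..3}. \<forall>xi\<in>U. (\<lambda>y. phi y k) differentiable (at xi)"
    and phi_sphere: "\<forall>xi\<in>U. (\<Sum>k\<in>{1..3}. (phi xi k)\<^sup>2) = 1"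
    and g_phi: "\<forall>xi\<in>U. \<forall>a\<in>{1..2}. \<forall>b\<in>{1..2}.
                  g xi a b = (\<Sum>k\<in>{1..3}. pd2 (\<lambda>y. phi y k) a xi * pd2 (\<lambda>y. phi y k) b xi)"
    and g_pos: "\<forall>xi\<in>U. detn 2 (g xi) > 0"
    and g_diff: "\<forall>a\<in>{1..2}. \<forall>b\<in>{1..2}. \<forall>xi\<in>U. (\<lambda>y. g y a b) differentiable (at xi)"
    (* smoothness of the flow fields and of the equation of state *)
    and rho_diff: "\<forall>x\<in>D. rho differentiable (at x)"
    and e_diff: "\<forall>x\<in>D. e differentiable (at x)"
    and V_diff: "\<forall>i\<in>{1..3}. \<forall>x\<in>D. (\<lambda>y. V y i) differentiable (at x)"
    and P_diff: "\<forall>z. (\<lambda>z. Pfun (fst z) (snd z)) differentiable (at z)"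
    and rho_pos: "\<forall>x\<in>D. rho x > 0"
    (* conical assumption: vanishing covariant derivative in the radial direction *)
    and conical_rho: "\<forall>x\<in>D. pd3 rho 3 x = 0"
    and conical_e: "\<forall>x\<in>D. pd3 e 3 x = 0"
    and conical_V: "\<forall>x\<in>D. \<forall>i\<in>{1..3}.
                      pd3 (\<lambda>y. V y i) 3 x + (\<Sum>k\<in>{1..3}. Gam3 G x i 3 k * V x k) = 0"
  shows "(\<forall>x\<in>D.
            cdiv_dens1 G (\<lambda>y j. rho y * sG y * V y j) x = 0
          \<and> (\<forall>i\<in>{1..3}. cdiv_dens2 G
                (\<lambda>y i j. sG y * (rho y * V y i * V y j + Gi y i j * P y)) x i = 0)
          \<and> cdiv_dens1 G (\<lambda>y j. sG y * (rho y * E y + P y) * V y j) x = 0)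
      \<longleftrightarrow>
         (\<forall>xi\<in>U.
            (\<Sum>b\<in>{1..2}. pd2 (\<lambda>y. rho2 y * sg y * v y b) b xi)
              + 2 * rho2 xi * sg xi * V3 xi = 0
          \<and> (\<forall>a\<in>{1..2}.
              (\<Sum>b\<in>{1..2}. pd2 (\<lambda>y. sg y * (rho2 y * v y a * v y b + gi y a b * P2 y)) b xi)
              + (\<Sum>c\<in>{1..2}. \<Sum>n\<in>{1..2}. Gam2 g xi a c n * sg xi
                    * (rho2 xi * v xi c * v xi n + gi xi c n * P2 xi))
              + 3 * rho2 xi * sg xi * v xi a * V3 xi = 0)
          \<and> (\<Sum>a\<in>{1..2}. v xi a * pd2 V3 a xi) - qc2 xi = 0
          \<and> (\<Sum>b\<in>{1..2}. pd2 (\<lambda>y. sg y * (rho2 y * E2 y + P2 y) * v y b) b xi)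
              + 2 * sg xi * (rho2 xi * E2 xi + P2 xi) * V3 xi = 0)"
proof -
  interpret cone U g phi rho e V Pfun G D sG Gi P E rho2 e2 v V3 sg gi qc2 P2 E2
    by (rule cone.intro) (fact assms)+
  show ?thesis by (rule main)
qed

end
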